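(* Let $Y$ be a real Banach space and $M$ a complete pointed metric space containing a pairly distanced sequence. Then $\mathrm{A}(M,Y)=\mathrm{Lip}_0(M,Y)$ if and only if $Y$ is finite-dimensional.
   Context: Throughout, metric spaces are complete and pointed, with base point $0$. $\mathrm{Lip}_0(M,Y)$ is the Banach space of Lipschitz maps $f:M\to Y$ with $f(0)=0$, normed by $\|f\|=\sup_{p\neq q}\|f(p)-f(q)\|/d(p,q)$. A map $f$ attains its norm toward $y\in Y$ if there is a sequence $(p_n,q_n)$ in $M\times M$ with $p_n\neq q_n$ such that $[f(p_n)-f(q_n)]/d(p_n,q_n)\to y$ and $\|y\|=\|f\|$; $\mathrm{A}(M,Y)$ is the set of $f$ attaining their norm toward some vector. A sequence $(x_n)$ of distinct points of $M$ is pairly distanced if there is a sequence $(r_n)\subseteq[0,1]$ such that for all $j\neq k$ in $\mathbb{N}$: (i) $d(x_{2j-1},x_{2k-1})\ge r_j d(x_{2j-1},x_{2j})+r_k d(x_{2k-1},x_{2k})$; (ii) $d(x_{2j-1},x_{2k})\ge r_j d(x_{2j-1},x_{2j})+(1-r_k)d(x_{2k-1},x_{2k})$; (iii) $d(x_{2j},x_{2k})\ge (1-r_j)d(x_{2j-1},x_{2j})+(1-r_k)d(x_{2k-1},x_{2k})$. *)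

theory Defs
  imports "HOL-Analysis.Analysis"
begin

text \<open>Metric spaces are types of class metric_space (complete via complete_space); the
base point is an explicit element x0. Y is a real Banach space (class banach).\<close>

definition Lip0 :: "'a::metric_space \<Rightarrow> ('a \<Rightarrow> 'b::real_normed_vector) set" where
  "Lip0 x0 = {f. (\<exists>C. C-lipschitz_on UNIV f) \<and> f x0 = 0}"

text \<open>Lipschitz norm: sup of the difference quotients over distinct pairs.\<close>
definition lip_norm :: "('a::metric_space \<Rightarrow> 'b::real_normed_vector) \<Rightarrow> real" where
  "lip_norm f = Sup {norm (f p - f q) / dist p q | p q. p \<noteq> q}"

definition attains_norm_toward :: "('a::metric_space \<Rightarrow> 'b::real_normed_vector) \<Rightarrow> 'b \<Rightarrow> bool" where
  "attains_norm_toward f y \<longleftrightarrow>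
     (\<exists>p q :: nat \<Rightarrow> 'a. (\<forall>n. p n \<noteq> q n) \<and>
        ((\<lambda>n. (1 / dist (p n) (q n)) *\<^sub>R (f (p n) - f (q n))) \<longlongrightarrow> y) sequentially \<and>
        norm y = lip_norm f)"

definition A_set :: "'a::metric_space \<Rightarrow> ('a \<Rightarrow> 'b::real_normed_vector) set" where
  "A_set x0 = {f \<in> Lip0 x0. \<exists>y. attains_norm_toward f y}"

text \<open>Pairly distanced sequence, re-indexed from 0: the pairs are (x (2j), x (2j+1)),
 corresponding to (x_{2j-1}, x_{2j}) in the paper with j shifted by one.\<close>
definition pairly_distanced :: "(nat \<Rightarrow> 'a::metric_space) \<Rightarrow> bool" where
  "pairly_distanced x \<longleftrightarrow> inj x \<and>
     (\<exists>r :: nat \<Rightarrow> real. (\<forall>n. 0 \<le> r n \<and> r n \<le> 1) \<and>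
       (\<forall>j k. j \<noteq> k \<longrightarrow>
          dist (x (2*j)) (x (2*k)) \<ge> r j * dist (x (2*j)) (x (2*j+1)) + r k * dist (x (2*k)) (x (2*k+1)) \<and>
          dist (x (2*j)) (x (2*k+1)) \<ge> r j * dist (x (2*j)) (x (2*j+1)) + (1 - r k) * dist (x (2*k)) (x (2*k+1)) \<and>
          dist (x (2*j+1)) (x (2*k+1)) \<ge> (1 - r j) * dist (x (2*j)) (x (2*j+1)) + (1 - r k) * dist (x (2*k)) (x (2*k+1))))"

end

theory Submission
  imports Defs
begin


lemma fdvs_iff:
  "(\<exists>B. finite_dimensional_vector_space ((*\<^sub>R) :: real \<Rightarrow> 'b \<Rightarrow> 'b::real_vector) B)
   \<longleftrightarrow> (\<exists>S. finite S \<and> span S = (UNIV::'b set))"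
proof
  assume "\<exists>B. finite_dimensional_vector_space ((*\<^sub>R) :: real \<Rightarrow> 'b \<Rightarrow> 'b::real_vector) B"
  then obtain B where B: "finite_dimensional_vector_space ((*\<^sub>R) :: real \<Rightarrow> 'b \<Rightarrow> 'b::real_vector) B" by blast
  then show "\<exists>S. finite S \<and> span S = (UNIV::'b set)"
    unfolding finite_dimensional_vector_space_def finite_dimensional_vector_space_axioms_def span_raw_def
    by blast
next
  assume "\<exists>S. finite S \<and> span S = (UNIV::'b set)"
  then obtain S where S: "finite S" "span S = (UNIV::'b set)" by blast
  obtain B where "B \<subseteq> S" "independent B" "S \<subseteq> span B" using maximal_independent_subset by blast
  then have "finite B" "span B = UNIV"
    using S finite_subset span_mono span_span by (metis, metis top.extremum_uniqueI)
  then show "\<exists>B. finite_dimensional_vector_space ((*\<^sub>R) :: real \<Rightarrow> 'b \<Rightarrow> 'b::real_vector) B"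
    using \<open>independent B\<close>
    unfolding finite_dimensional_vector_space_def finite_dimensional_vector_space_axioms_def span_raw_def dependent_raw_def
    using real_vector.vector_space_axioms by blast
qed



lemma span_bw:
  fixes S :: "'b::real_normed_vector set"
  assumes "finite S"
  shows "\<forall>X::nat\<Rightarrow>'b. (\<forall>n. X n \<in> span S) \<longrightarrow> bounded (range X) \<longrightarrow>
          (\<exists>r l. strict_mono r \<and> l \<in> span S \<and> (X \<circ> r) \<longlonglongrightarrow> l)"
  using assms
proof (induction S rule: finite_induct)
  case empty
  show ?case proof (intro allI impI) 
    fix X :: "nat \<Rightarrow> 'b" assume X0: "\<forall>n. X n \<in> span {}" and "bounded (range X)"
    show "\<exists>r l. strict_mono r \<and> l \<in> span {} \<and> (X \<circ> r) \<longlonglongrightarrow> l"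
    proof (intro exI conjI)
      show "strict_mono (id::nat\<Rightarrow>nat)" by (simp add: strict_mono_def)
      show "(0::'b) \<in> span {}" by (rule span_zero)
      have "X = (\<lambda>n. 0)" using X0 by auto
      then show "(X \<circ> id) \<longlonglongrightarrow> 0" by simp
    qed
  qed
next
  case (insert v T)
  show ?case
  proof (cases "v \<in> span T")
    case True
    then show ?thesis using insert.IH span_redundant[OF True] by simp
  next
    case False
    have cl: "closed (span T)"
    proof (rule closed_sequential_limits[THEN iffD2], intro allI impI, elim conjE)
      fix X l assume X: "\<forall>n. X n \<in> span T" and lim: "X \<longlonglongrightarrow> l"
      have "bounded (range X)" using lim convergent_imp_bounded by blast
      then obtain r l' where r: "strict_mono r" "l' \<in> span T" "(X \<circ> r) \<longlonglongrightarrow> l'"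
        using insert.IH X by blast
      have "(X \<circ> r) \<longlonglongrightarrow> l" using lim r(1) LIMSEQ_subseq_LIMSEQ by blast
      then have "l = l'" using r(3) LIMSEQ_unique by blast
      then show "l \<in> span T" using r(2) by simp
    qed
    define d where "d = infdist v (span T)"
    have dpos: "d > 0" unfolding d_def
      using infdist_pos_not_in_closed[OF cl] False span_zero by blast
    have key: "\<bar>c\<bar> * d \<le> norm (t + c *\<^sub>R v)" if "t \<in> span T" for t c
    proof (cases "c = 0")
      case True then show ?thesis by simp
    next
      case False
      have "(-(1/c)) *\<^sub>R t \<in> span T" using that span_scale by blast
      then have "d \<le> dist v ((-(1/c)) *\<^sub>R t)" unfolding d_def by (rule infdist_le)
      also have "\<dots> = norm (v + (1/c) *\<^sub>R t)" by (simp add: dist_norm)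
      finally have "\<bar>c\<bar> * d \<le> \<bar>c\<bar> * norm (v + (1/c) *\<^sub>R t)"
        by (simp add: mult_left_mono)
      also have "\<dots> = norm (c *\<^sub>R (v + (1/c) *\<^sub>R t))" by simp
      also have "c *\<^sub>R (v + (1/c) *\<^sub>R t) = t + c *\<^sub>R v"
        using False by (simp add: algebra_simps)
      finally show ?thesis .
    qed
    show ?thesis
    proof (intro allI impI)
      fix X :: "nat \<Rightarrow> 'b"
      assume X: "\<forall>n. X n \<in> span (insert v T)" and bX: "bounded (range X)"
      have "\<forall>n. \<exists>k. X n - k *\<^sub>R v \<in> span T" using X by (simp add: span_insert)
      then obtain c where c: "\<And>n. X n - c n *\<^sub>R v \<in> span T" by metis
      define t where "t n = X n - c n *\<^sub>R v" for n
      have tT: "t n \<in> span T" for n using c t_def by simp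
      obtain B where B: "\<And>n. norm (X n) \<le> B" using bX unfolding bounded_iff by auto
      have cb: "\<bar>c n\<bar> \<le> B / d" for n
      proof -
        have "\<bar>c n\<bar> * d \<le> norm (X n)" using key[OF tT[of n], of "c n"] by (simp add: t_def)
        then show ?thesis using B[of n] dpos by (simp add: pos_le_divide_eq)
      qed
      have "bounded (range c)" using cb unfolding bounded_iff by (auto intro!: exI[of _ "B/d"])
      then obtain r1 c0 where r1: "strict_mono r1" "(c \<circ> r1) \<longlonglongrightarrow> c0"
        using bounded_imp_convergent_subsequence[of c] by auto
      have tb: "norm (t n) \<le> B + B / d * norm v" for n
      proof -
        have "norm (t n) \<le> norm (X n) + \<bar>c n\<bar> * norm v" unfolding t_def
          using norm_triangle_ineq4[of "X n" "c n *\<^sub>R v"] by simp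
        also have "\<dots> \<le> B + B / d * norm v"
          using B[of n] cb[of n] by (intro add_mono mult_right_mono) auto
        finally show ?thesis .
      qed
      have "bounded (range (t \<circ> r1))" using tb unfolding bounded_iff by auto
      then obtain r2 t0 where r2: "strict_mono r2" "t0 \<in> span T" "((t \<circ> r1) \<circ> r2) \<longlonglongrightarrow> t0"
        using insert.IH tT by (metis comp_apply)
      have "((c \<circ> r1) \<circ> r2) \<longlonglongrightarrow> c0" using r1(2) r2(1) LIMSEQ_subseq_LIMSEQ by blast
      then have "(\<lambda>n. t (r1 (r2 n)) + c (r1 (r2 n)) *\<^sub>R v) \<longlonglongrightarrow> t0 + c0 *\<^sub>R v"
        using r2(3) by (intro tendsto_intros) (auto simp: o_def)
      moreover have "t (r1 (r2 n)) + c (r1 (r2 n)) *\<^sub>R v = X (r1 (r2 n))" for n by (simp add: t_def)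
      ultimately have "(X \<circ> (r1 \<circ> r2)) \<longlonglongrightarrow> t0 + c0 *\<^sub>R v" by (simp add: o_def)
      moreover have "t0 + c0 *\<^sub>R v \<in> span (insert v T)"
        using r2(2) by (meson span_add span_base span_mono span_scale insertI1 subset_insertI subsetD)
      moreover have "strict_mono (r1 \<circ> r2)" using r1(1) r2(1) strict_mono_o by blast
      ultimately show "\<exists>r l. strict_mono r \<and> l \<in> span (insert v T) \<and> (X \<circ> r) \<longlonglongrightarrow> l" by blast
    qed
  qed
qed



lemma closed_span_finite:
  fixes S :: "'b::real_normed_vector set"
  assumes "finite S" shows "closed (span S)"
proof (rule closed_sequential_limits[THEN iffD2], intro allI impI, elim conjE)
  fix X :: "nat \<Rightarrow> 'b" and l assume X: "\<forall>n. X n \<in> span S" and lim: "X \<longlonglongrightarrow> l"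
  have "bounded (range X)" using lim convergent_imp_bounded by blast
  then obtain r l' where r: "strict_mono r" "l' \<in> span S" "(X \<circ> r) \<longlonglongrightarrow> l'"
    using span_bw[OF assms] X by blast
  have "(X \<circ> r) \<longlonglongrightarrow> l" using lim r(1) LIMSEQ_subseq_LIMSEQ by blast
  then have "l = l'" using r(3) LIMSEQ_unique by blast
  then show "l \<in> span S" using r(2) by simp
qed

lemma riesz:
  fixes S :: "'b::real_normed_vector set"
  assumes "finite S" "span S \<noteq> UNIV"
  shows "\<exists>e. norm e = 1 \<and> (\<forall>w\<in>span S. 1/2 \<le> norm (e - w))"
proof -
  obtain z where z: "z \<notin> span S" using assms(2) by blast
  define d where "d = infdist z (span S)"
  have ne: "span S \<noteq> {}" using span_zero by blast
  have dpos: "d > 0" unfolding d_def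
    using infdist_pos_not_in_closed[OF closed_span_finite[OF assms(1)] ne z] .
  have "\<exists>s\<in>span S. dist z s < 2 * d"
  proof (rule ccontr)
    assume "\<not> ?thesis"
    then have "\<forall>s\<in>span S. 2 * d \<le> dist z s" by auto
    then have "2 * d \<le> d" unfolding d_def infdist_notempty[OF ne]
      by (intro cINF_greatest ne) auto
    then show False using dpos by simp
  qed
  then obtain s where s: "s \<in> span S" "dist z s < 2 * d" by blast
  define c where "c = norm (z - s)"
  have cpos: "c > 0" unfolding c_def using s(1) z by auto
  have c2: "c < 2 * d" using s(2) by (simp add: c_def dist_norm)
  show ?thesis
  proof (intro exI conjI ballI)
    show "norm ((1/c) *\<^sub>R (z - s)) = 1" using cpos by (simp add: c_def)
    fix w assume w: "w \<in> span S"
    have "s + c *\<^sub>R w \<in> span S" using w s(1) by (simp add: span_add span_scale)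
    then have "d \<le> dist z (s + c *\<^sub>R w)" unfolding d_def by (rule infdist_le)
    also have "\<dots> = norm (c *\<^sub>R ((1/c) *\<^sub>R (z - s) - w))"
      using cpos by (simp add: dist_norm algebra_simps)
    also have "\<dots> = c * norm ((1/c) *\<^sub>R (z - s) - w)" using cpos by simp
    finally have "d \<le> c * norm ((1/c) *\<^sub>R (z - s) - w)" .
    then have "d / c \<le> norm ((1/c) *\<^sub>R (z - s) - w)" using cpos
      by (simp add: divide_le_eq mult.commute)
    moreover have "1/2 \<le> d / c" using cpos c2 by (simp add: field_simps)
    ultimately show "1/2 \<le> norm ((1/c) *\<^sub>R (z - s) - w)" by linarith
  qed
qed

lemma riesz_seq:
  assumes "\<forall>S::'b::real_normed_vector set. finite S \<longrightarrow> span S \<noteq> UNIV"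
  shows "\<exists>e::nat \<Rightarrow> 'b. \<forall>n. norm (e n) = 1 \<and> (\<forall>w\<in>span (e ` {..<n}). 1/2 \<le> norm (e n - w))"
proof -
  define pick where "pick A = (SOME e. norm e = 1 \<and> (\<forall>w\<in>span A. 1/2 \<le> norm (e - w)))" for A :: "'b set"
  have pick: "norm (pick A) = 1 \<and> (\<forall>w\<in>span A. 1/2 \<le> norm (pick A - w))" if "finite A" for A
  proof -
    have "\<exists>e. norm e = 1 \<and> (\<forall>w\<in>span A. 1/2 \<le> norm (e - w))"
      using riesz[OF that] assms that by blast
    then show ?thesis unfolding pick_def by (rule someI_ex)
  qed
  define E where "E = rec_nat {} (\<lambda>n A. insert (pick A) A)"
  define e where "e n = pick (E n)" for n
  have E: "E n = e ` {..<n}" for n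
    by (induction n) (auto simp: E_def e_def lessThan_Suc)
  show ?thesis
  proof (intro exI[of _ e] allI)
    fix n
    have "finite (E n)" by (simp add: E)
    from pick[OF this] show "norm (e n) = 1 \<and> (\<forall>w\<in>span (e ` {..<n}). 1/2 \<le> norm (e n - w))"
      unfolding E[symmetric] e_def by simp
  qed
qed

lemma sep:
  fixes e :: "nat \<Rightarrow> 'b::real_normed_vector"
  assumes "\<forall>n. norm (e n) = 1 \<and> (\<forall>w\<in>span (e ` {..<n}). 1/2 \<le> norm (e n - w))"
    and "w \<in> span (e ` {..<k})"
  shows "\<bar>c\<bar> / 2 \<le> norm (c *\<^sub>R e k - w)"
proof (cases "c = 0")
  case True then show ?thesis by simp
next
  case False
  have "(1/c) *\<^sub>R w \<in> span (e ` {..<k})" using assms(2) span_scale by blast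
  then have "1/2 \<le> norm (e k - (1/c) *\<^sub>R w)" using assms(1) by blast
  then have "\<bar>c\<bar> * (1/2) \<le> \<bar>c\<bar> * norm (e k - (1/c) *\<^sub>R w)" by (rule mult_left_mono) auto
  also have "\<dots> = norm (c *\<^sub>R (e k - (1/c) *\<^sub>R w))" by simp
  also have "c *\<^sub>R (e k - (1/c) *\<^sub>R w) = c *\<^sub>R e k - w" using False by (simp add: algebra_simps)
  finally show ?thesis by simp
qed



lemma lip_quot_bound:
  assumes "C-lipschitz_on UNIV f" "p \<noteq> q"
  shows "norm (f p - f q) / dist p q \<le> C"
proof -
  have "dist (f p) (f q) \<le> C * dist p q" by (rule lipschitz_onD[OF assms(1)]) auto
  then have "norm (f p - f q) \<le> C * dist p q" by (simp add: dist_norm)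
  moreover have "dist p q > 0" using assms(2) by simp
  ultimately show ?thesis by (simp add: divide_le_eq)
qed

lemma fin_attain:
  fixes f :: "'a::metric_space \<Rightarrow> 'b::real_normed_vector" and p0 q0 :: 'a and S :: "'b set"
  assumes S: "finite S" "span S = UNIV" and f: "C-lipschitz_on UNIV f" and pq: "p0 \<noteq> q0"
  shows "\<exists>y. attains_norm_toward f y"
proof -
  define D where "D = {norm (f p - f q) / dist p q | p q. p \<noteq> q}"
  have "norm (f p0 - f q0) / dist p0 q0 \<in> D" unfolding D_def using pq by blast
  then have Dne: "D \<noteq> {}" by blast
  have Dbd: "bdd_above D"
  proof (rule bdd_aboveI)
    fix x assume "x \<in> D"
    then obtain p q where "p \<noteq> q" "x = norm (f p - f q) / dist p q" unfolding D_def by blast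
    then show "x \<le> C" using lip_quot_bound[OF f] by simp
  qed
  define L where "L = Sup D"
  have LD: "lip_norm f = L" unfolding L_def D_def lip_norm_def ..
  have "\<forall>n. \<exists>pq. fst pq \<noteq> snd pq \<and> L - inverse (real (Suc n)) < norm (f (fst pq) - f (snd pq)) / dist (fst pq) (snd pq)"
  proof
    fix n
    have "L - inverse (real (Suc n)) < L" by simp
    then obtain t where "t \<in> D" "L - inverse (real (Suc n)) < t"
      unfolding L_def by (rule less_cSupE[OF _ Dne])
    then show "\<exists>pq. fst pq \<noteq> snd pq \<and> L - inverse (real (Suc n)) < norm (f (fst pq) - f (snd pq)) / dist (fst pq) (snd pq)"
      unfolding D_def by (auto intro!: exI[of _ "(p,q)" for p q])
  qed
  from choice[OF this] obtain P where P0: "\<forall>n. fst (P n) \<noteq> snd (P n) \<and> 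
    L - inverse (real (Suc n)) < norm (f (fst (P n)) - f (snd (P n))) / dist (fst (P n)) (snd (P n))"
    by blast
  have P: "\<And>n. fst (P n) \<noteq> snd (P n)"
    "\<And>n. L - inverse (real (Suc n)) < norm (f (fst (P n)) - f (snd (P n))) / dist (fst (P n)) (snd (P n))"
    using P0 by auto
  define p where "p n = fst (P n)" for n
  define q where "q n = snd (P n)" for n
  define Q where "Q n = (1 / dist (p n) (q n)) *\<^sub>R (f (p n) - f (q n))" for n
  have nQ: "norm (Q n) = norm (f (p n) - f (q n)) / dist (p n) (q n)" for n
    unfolding Q_def by simp
  have Qin: "norm (Q n) \<in> D" for n unfolding nQ D_def using P(1)[of n]
    by (intro CollectI exI[of _ "p n"] exI[of _ "q n"]) (simp add: p_def q_def)
  have QL: "norm (Q n) \<le> L" for n unfolding L_def using Qin Dbd by (simp add: cSup_upper)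
  have QL2: "L - inverse (real (Suc n)) < norm (Q n)" for n unfolding nQ p_def q_def using P(2) .
  have nQlim: "(\<lambda>n. norm (Q n)) \<longlonglongrightarrow> L"
  proof (rule real_tendsto_sandwich)
    show "\<forall>\<^sub>F n in sequentially. L - inverse (real (Suc n)) \<le> norm (Q n)"
      using QL2 less_imp_le by (intro always_eventually allI) blast
    show "\<forall>\<^sub>F n in sequentially. norm (Q n) \<le> L" using QL by (intro always_eventually allI) blast
    show "(\<lambda>n. L - inverse (real (Suc n))) \<longlonglongrightarrow> L"
      using tendsto_diff[OF tendsto_const LIMSEQ_inverse_real_of_nat, of L] by simp
    show "(\<lambda>n. L) \<longlonglongrightarrow> L" by (rule tendsto_const)
  qed
  have "bounded (range Q)" unfolding bounded_iff using QL by auto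
  then obtain r y where r: "strict_mono r" "(Q \<circ> r) \<longlonglongrightarrow> y"
    using span_bw[OF S(1)] S(2) by blast
  have "(\<lambda>n. norm ((Q \<circ> r) n)) \<longlonglongrightarrow> norm y" using r(2) by (rule tendsto_norm)
  moreover have "(\<lambda>n. norm ((Q \<circ> r) n)) \<longlonglongrightarrow> L"
    using LIMSEQ_subseq_LIMSEQ[OF nQlim r(1)] by (simp add: o_def)
  ultimately have "norm y = L" using LIMSEQ_unique by blast
  have "attains_norm_toward f y"
    unfolding attains_norm_toward_def
  proof (intro exI conjI)
    show "\<forall>n. (p \<circ> r) n \<noteq> (q \<circ> r) n" using P(1) by (simp add: p_def q_def)
    show "(\<lambda>n. (1 / dist ((p \<circ> r) n) ((q \<circ> r) n)) *\<^sub>R (f ((p \<circ> r) n) - f ((q \<circ> r) n))) \<longlonglongrightarrow> y"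
      using r(2) by (simp add: Q_def o_def)
    show "norm y = lip_norm f" using \<open>norm y = L\<close> LD by simp
  qed
  then show ?thesis ..
qed



definition "aa j = 1 - 1 / (real j + 2)"

lemma aa: "0 \<le> aa j" "aa j \<le> 1" "aa j < 1"
  unfolding aa_def by (auto simp: field_simps)

lemma aa_mono: "j \<le> k \<Longrightarrow> aa j \<le> aa k"
  unfolding aa_def by (auto simp: field_simps)

lemma aa_less: "aa j < aa k \<Longrightarrow> j < k"
  using aa_mono by (metis not_le leD)

lemma num:
  fixes a b s t :: real
  assumes "0 \<le> a" "a \<le> 1" "0 \<le> b" "b \<le> 1" "\<bar>s\<bar> + \<bar>t\<bar> \<le> 1"
  shows "\<bar>a * s\<bar> \<le> a \<and> \<bar>b * t\<bar> \<le> b \<and> \<bar>a * s\<bar> + \<bar>b * t\<bar> \<le> max a b"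
proof -
  have "\<bar>a * s\<bar> = a * \<bar>s\<bar>" "\<bar>b * t\<bar> = b * \<bar>t\<bar>" using assms by (simp_all add: abs_mult)
  moreover have "a * \<bar>s\<bar> \<le> max a b * \<bar>s\<bar>" "b * \<bar>t\<bar> \<le> max a b * \<bar>t\<bar>"
    by (auto intro: mult_right_mono)
  moreover have "max a b * \<bar>s\<bar> + max a b * \<bar>t\<bar> \<le> max a b"
    using assms mult_left_mono[OF assms(5), of "max a b"] by (simp add: algebra_simps)
  moreover have "a * \<bar>s\<bar> \<le> a" "b * \<bar>t\<bar> \<le> b"
    using assms mult_left_mono[of "\<bar>s\<bar>" 1 a] mult_left_mono[of "\<bar>t\<bar>" 1 b] by auto
  ultimately show ?thesis by linarith
qed



definition "sepseq (e :: nat \<Rightarrow> 'b::real_normed_vector) \<longleftrightarrow>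
  (\<forall>n. norm (e n) = 1 \<and> (\<forall>w\<in>span (e ` {..<n}). 1/2 \<le> norm (e n - w)))"

lemma helper:
  fixes e :: "nat \<Rightarrow> 'b::real_normed_vector"
  assumes se: "sepseq e" and w: "w \<in> span (e ` {..<k})" and jk: "j < k"
    and a: "norm (\<alpha> *\<^sub>R e j + \<beta> *\<^sub>R e k - w) < 2 * \<epsilon>"
    and b: "norm (\<alpha> *\<^sub>R e j + \<beta> *\<^sub>R e k - y) < \<epsilon>"
  shows "norm (y - \<alpha> *\<^sub>R e j) \<le> 5 * \<epsilon>"
proof -
  have ej: "e j \<in> span (e ` {..<k})" using jk by (intro span_base) auto
  have w': "w - \<alpha> *\<^sub>R e j \<in> span (e ` {..<k})" using w ej by (intro span_diff span_scale)
  have "\<bar>\<beta>\<bar> / 2 \<le> norm (\<beta> *\<^sub>R e k - (w - \<alpha> *\<^sub>R e j))"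
    using sep[OF se[unfolded sepseq_def] w'] .
  also have "\<beta> *\<^sub>R e k - (w - \<alpha> *\<^sub>R e j) = \<alpha> *\<^sub>R e j + \<beta> *\<^sub>R e k - w" by (simp add: algebra_simps)
  finally have bb: "\<bar>\<beta>\<bar> < 4 * \<epsilon>" using a by simp
  have "y - \<alpha> *\<^sub>R e j = (y - (\<alpha> *\<^sub>R e j + \<beta> *\<^sub>R e k)) + \<beta> *\<^sub>R e k" by (simp add: algebra_simps)
  then have "norm (y - \<alpha> *\<^sub>R e j) \<le> norm (y - (\<alpha> *\<^sub>R e j + \<beta> *\<^sub>R e k)) + norm (\<beta> *\<^sub>R e k)"
    by (metis norm_triangle_ineq)
  also have "norm (\<beta> *\<^sub>R e k) = \<bar>\<beta>\<bar>" using se by (simp add: sepseq_def)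
  also have "norm (y - (\<alpha> *\<^sub>R e j + \<beta> *\<^sub>R e k)) < \<epsilon>" using b by (simp add: norm_minus_commute)
  finally show ?thesis using bb by simp
qed

lemma L1:
  fixes e :: "nat \<Rightarrow> 'b::real_normed_vector"
  assumes se: "sepseq e"
    and rep: "\<forall>n. Q n = A n *\<^sub>R e (J n) + B n *\<^sub>R e (K n) \<and> \<bar>A n\<bar> \<le> aa (J n) \<and> \<bar>B n\<bar> \<le> aa (K n)
               \<and> \<bar>A n\<bar> + \<bar>B n\<bar> \<le> max (aa (J n)) (aa (K n))"
    and lim: "Q \<longlonglongrightarrow> y" and ny: "norm y = 1"
    and eps: "0 < \<epsilon>" "\<epsilon> \<le> 1/100"
  shows "\<exists>l \<delta>. norm (y - \<delta> *\<^sub>R e l) \<le> 5 * \<epsilon> \<and> \<bar>\<delta>\<bar> \<le> aa l"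
proof -
  have e1: "norm (e n) = 1" for n using se by (simp add: sepseq_def)
  obtain N where N: "\<And>n. n \<ge> N \<Longrightarrow> norm (Q n - y) < \<epsilon>" using LIMSEQ_D[OF lim eps(1)] by blast
  define M where "M = max (J N) (K N)"
  have "(\<lambda>n. norm (Q n)) \<longlonglongrightarrow> norm y" using lim by (rule tendsto_norm)
  moreover have "0 < 1 - aa M" using aa(3)[of M] by simp
  ultimately obtain N2 where N2: "\<And>n. n \<ge> N2 \<Longrightarrow> norm (norm (Q n) - norm y) < 1 - aa M"
    using LIMSEQ_D by blast
  define n where "n = max N N2"
  have Qn: "norm (Q n - y) < \<epsilon>" using N[of n] by (simp add: n_def)
  have QN: "norm (Q N - y) < \<epsilon>" using N[of N] by simp
  have big: "aa M < norm (Q n)" using N2[of n] ny by (simp add: n_def)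
  have nb: "norm (Q m) \<le> max (aa (J m)) (aa (K m))" for m
  proof -
    have "norm (Q m) \<le> norm (A m *\<^sub>R e (J m)) + norm (B m *\<^sub>R e (K m))"
      using rep norm_triangle_ineq by metis
    also have "\<dots> = \<bar>A m\<bar> + \<bar>B m\<bar>" using e1 by simp
    finally show ?thesis using rep by (meson order_trans)
  qed
  have claim: "M < J n \<or> M < K n"
  proof (rule ccontr)
    assume "\<not> ?thesis"
    then have "aa (J n) \<le> aa M" "aa (K n) \<le> aa M" by (auto intro: aa_mono)
    then show False using nb[of n] big by linarith
  qed
  have QNspan: "Q N \<in> span (e ` {..<m})" if "M < m" for m
  proof -
    have "e (J N) \<in> span (e ` {..<m})" "e (K N) \<in> span (e ` {..<m})"
      using that by (auto intro!: span_base simp: M_def)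
    then show ?thesis using rep by (metis span_add span_scale)
  qed
  have close: "norm (Q n - Q N) < 2 * \<epsilon>"
  proof -
    have "Q n - Q N = (Q n - y) - (Q N - y)" by simp
    then have "norm (Q n - Q N) \<le> norm (Q n - y) + norm (Q N - y)" by (metis norm_triangle_ineq4)
    then show ?thesis using Qn QN by linarith
  qed
  have Qnrep: "Q n = A n *\<^sub>R e (J n) + B n *\<^sub>R e (K n)" and ab: "\<bar>A n\<bar> \<le> aa (J n)" "\<bar>B n\<bar> \<le> aa (K n)"
    using rep by auto
  consider (eq) "J n = K n" | (lt) "J n < K n" | (gt) "K n < J n" by linarith
  then show ?thesis
  proof cases
    case eq
    then have kM: "M < K n" using claim by auto
    have Qe: "Q n = (A n + B n) *\<^sub>R e (K n)" using Qnrep eq by (simp add: scaleR_add_left)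
    have "\<bar>A n + B n\<bar> / 2 \<le> norm ((A n + B n) *\<^sub>R e (K n) - Q N)"
      using sep[OF se[unfolded sepseq_def] QNspan[OF kM]] .
    then have "norm (Q n) < 4 * \<epsilon>" using close Qe e1 by simp
    moreover have "1 - \<epsilon> < norm (Q n)"
    proof -
      have "norm y \<le> norm (Q n) + norm (Q n - y)" by (metis norm_triangle_sub add.commute norm_minus_commute)
      then show ?thesis using Qn ny by linarith
    qed
    ultimately show ?thesis using eps by linarith
  next
    case lt
    then have kM: "M < K n" using claim by auto
    have "norm (y - A n *\<^sub>R e (J n)) \<le> 5 * \<epsilon>"
      using helper[OF se QNspan[OF kM] lt, of "A n" "B n" \<epsilon> y] close Qn Qnrep by simp
    then show ?thesis using ab by blast
  next
    case gt
    then have jM: "M < J n" using claim by auto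
    have "norm (y - B n *\<^sub>R e (K n)) \<le> 5 * \<epsilon>"
      using helper[OF se QNspan[OF jM] gt, of "B n" "A n" \<epsilon> y] close Qn Qnrep by (simp add: add.commute)
    then show ?thesis using ab by blast
  qed
qed

lemma L2:
  fixes e :: "nat \<Rightarrow> 'b::real_normed_vector"
  assumes se: "sepseq e"
    and rep: "\<forall>n. Q n = A n *\<^sub>R e (J n) + B n *\<^sub>R e (K n) \<and> \<bar>A n\<bar> \<le> aa (J n) \<and> \<bar>B n\<bar> \<le> aa (K n)
               \<and> \<bar>A n\<bar> + \<bar>B n\<bar> \<le> max (aa (J n)) (aa (K n))"
    and lim: "Q \<longlonglongrightarrow> y" and ny: "norm y = 1"
  shows False
proof -
  have e1: "norm (e n) = 1" for n using se by (simp add: sepseq_def)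
  have lowd: "1 - 5 * \<epsilon> \<le> \<bar>\<delta>\<bar>" if "norm (y - \<delta> *\<^sub>R e l) \<le> 5 * \<epsilon>" for \<delta> l \<epsilon>
  proof -
    have "norm y \<le> norm (y - \<delta> *\<^sub>R e l) + norm (\<delta> *\<^sub>R e l)"
      using norm_triangle_ineq[of "y - \<delta> *\<^sub>R e l" "\<delta> *\<^sub>R e l"] by simp
    then show ?thesis using that ny e1 by simp
  qed
  obtain l1 d1 where 1: "norm (y - d1 *\<^sub>R e l1) \<le> 5 * (1/100)" "\<bar>d1\<bar> \<le> aa l1"
    using L1[OF se rep lim ny, of "1/100"] by auto
  have d1: "1 - 5 * (1/100) \<le> \<bar>d1\<bar>" using lowd[OF 1(1)] .
  define \<epsilon> where "\<epsilon> = min (1/100) ((1 - aa l1) / 10)"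
  have ep: "0 < \<epsilon>" "\<epsilon> \<le> 1/100" "\<epsilon> \<le> (1 - aa l1) / 10" using aa(3)[of l1] unfolding \<epsilon>_def by (auto simp: min_def)
  obtain l2 d2 where 2: "norm (y - d2 *\<^sub>R e l2) \<le> 5 * \<epsilon>" "\<bar>d2\<bar> \<le> aa l2"
    using L1[OF se rep lim ny ep(1,2)] by auto
  have d2: "1 - 5 * \<epsilon> \<le> \<bar>d2\<bar>" using lowd[OF 2(1)] .
  have "10 * \<epsilon> \<le> 1 - aa l1" using ep(3) by simp
  then have "aa l1 < aa l2" using d2 2(2) aa(3)[of l1] by linarith
  then have l12: "l1 < l2" by (rule aa_less)
  have sp: "d1 *\<^sub>R e l1 \<in> span (e ` {..<l2})" using l12 by (intro span_scale span_base) auto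
  have "\<bar>d2\<bar> / 2 \<le> norm (d2 *\<^sub>R e l2 - d1 *\<^sub>R e l1)"
    using sep[OF se[unfolded sepseq_def] sp] .
  also have "d2 *\<^sub>R e l2 - d1 *\<^sub>R e l1 = (y - d1 *\<^sub>R e l1) - (y - d2 *\<^sub>R e l2)" by simp
  also have "norm \<dots> \<le> norm (y - d1 *\<^sub>R e l1) + norm (y - d2 *\<^sub>R e l2)" by (rule norm_triangle_ineq4)
  finally show False using 1(1) 2(1) d2 ep by linarith
qed

context
  fixes x :: "nat \<Rightarrow> 'a::metric_space" and r :: "nat \<Rightarrow> real"
  assumes injx: "inj x" and r01: "\<forall>n. 0 \<le> r n \<and> r n \<le> 1"
    and pd: "\<forall>j k. j \<noteq> k \<longrightarrow>
          dist (x (2*j)) (x (2*k)) \<ge> r j * dist (x (2*j)) (x (2*j+1)) + r k * dist (x (2*k)) (x (2*k+1)) \<and>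
          dist (x (2*j)) (x (2*k+1)) \<ge> r j * dist (x (2*j)) (x (2*j+1)) + (1 - r k) * dist (x (2*k)) (x (2*k+1)) \<and>
          dist (x (2*j+1)) (x (2*k+1)) \<ge> (1 - r j) * dist (x (2*j)) (x (2*j+1)) + (1 - r k) * dist (x (2*k)) (x (2*k+1))"
begin

definition "dd j = dist (x (2*j)) (x (2*j+1))"
definition "rho j = r j * dd j"
definition "sig j = (1 - r j) * dd j"
definition "hh j p = max 0 (rho j - dist p (x (2*j))) - max 0 (sig j - dist p (x (2*j+1)))"

lemma rs: "rho j \<ge> 0" "sig j \<ge> 0" "rho j + sig j = dd j"
proof -
  have "0 \<le> r j" "r j \<le> 1" using r01 by auto
  then show "rho j \<ge> 0" "sig j \<ge> 0" "rho j + sig j = dd j"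
    by (auto simp: rho_def sig_def dd_def algebra_simps intro: mult_left_le_one_le)
qed

lemma dd_pos: "dd j > 0"
proof -
  have "x (2*j) \<noteq> x (2*j+1)" using injx by (metis inj_eq n_not_Suc_n add.commute plus_1_eq_Suc)
  then show ?thesis by (simp add: dd_def)
qed

lemma pd': assumes "j \<noteq> k"
  shows "rho j + rho k \<le> dist (x (2*j)) (x (2*k))"
    "rho j + sig k \<le> dist (x (2*j)) (x (2*k+1))"
    "sig j + rho k \<le> dist (x (2*j+1)) (x (2*k))"
    "sig j + sig k \<le> dist (x (2*j+1)) (x (2*k+1))"
proof -
  have "k \<noteq> j" using assms by simp
  from pd[rule_format, OF assms] pd[rule_format, OF this]
  show "rho j + rho k \<le> dist (x (2*j)) (x (2*k))"
    "rho j + sig k \<le> dist (x (2*j)) (x (2*k+1))"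
    "sig j + rho k \<le> dist (x (2*j+1)) (x (2*k))"
    "sig j + sig k \<le> dist (x (2*j+1)) (x (2*k+1))"
    by (auto simp: rho_def sig_def dd_def dist_commute)
qed

lemma tri: "dist a c \<le> dist a b + dist b c" for a b c :: 'a
  by (rule dist_triangle)

lemma H1: "\<bar>hh j p - hh j q\<bar> \<le> dist p q"
proof -
  define u where "u = x (2*j)"
  define v where "v = x (2*j+1)"
  have t: "dist u v \<le> dist u p + dist p v" "dist p u \<le> dist p q + dist q u" "dist q u \<le> dist q p + dist p u"
    "dist p v \<le> dist p q + dist q v" "dist q v \<le> dist q p + dist p v"
    "dist u v \<le> dist u p + dist p v" "dist u q \<le> dist u p + dist p q"  "dist p v \<le> dist p q + dist q v"
    "dist u p \<le> dist u q + dist q p"  "dist q v \<le> dist q p + dist p v" "dist u v \<le> dist u q + dist q v"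
    by (rule tri)+
  have e: "rho j + sig j = dist u v" "rho j \<ge> 0" "sig j \<ge> 0" using rs by (auto simp: u_def v_def dd_def)
  have c: "dist u p = dist p u" "dist q p = dist p q" "dist u q = dist q u" by (simp_all add: dist_commute)
  show ?thesis unfolding hh_def u_def[symmetric] v_def[symmetric]
    using t e c unfolding max_def abs_if by (smt (verit))
qed

lemma H2:
  assumes jk: "j \<noteq> k" and nz: "hh j p \<noteq> 0" "hh k q \<noteq> 0"
  shows "\<bar>hh j p\<bar> + \<bar>hh k q\<bar> \<le> dist p q"
proof -
  define u1 where "u1 = x (2*j)"
  define v1 where "v1 = x (2*j+1)"
  define u2 where "u2 = x (2*k)"
  define v2 where "v2 = x (2*k+1)"
  have a: "dist u1 u2 \<le> dist u1 p + dist p u2" "dist p u2 \<le> dist p q + dist q u2"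
    "dist u1 v2 \<le> dist u1 p + dist p v2" "dist p v2 \<le> dist p q + dist q v2"
    "dist v1 u2 \<le> dist v1 p + dist p u2" 
    "dist v1 v2 \<le> dist v1 p + dist p v2"
    by (rule tri)+
  have c: "dist u1 p = dist p u1" "dist v1 p = dist p v1" by (simp_all add: dist_commute)
  have s: "rho j + rho k \<le> dist u1 u2" "rho j + sig k \<le> dist u1 v2"
    "sig j + rho k \<le> dist v1 u2" "sig j + sig k \<le> dist v1 v2"
    using pd'[OF jk] by (simp_all add: u1_def u2_def v1_def v2_def)
  have r: "rho j \<ge> 0" "sig j \<ge> 0" "rho k \<ge> 0" "sig k \<ge> 0" using rs by auto
  show ?thesis using nz unfolding hh_def u1_def[symmetric] v1_def[symmetric] u2_def[symmetric] v2_def[symmetric]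
    using a c s r unfolding max_def abs_if by (smt (verit))
qed

lemma H0: assumes "k \<noteq> j" shows "hh k (x (2*j)) = 0" "hh k (x (2*j+1)) = 0"
proof -
  have s: "rho k + rho j \<le> dist (x (2*k)) (x (2*j))" "rho k + sig j \<le> dist (x (2*k)) (x (2*j+1))"
    "sig k + rho j \<le> dist (x (2*k+1)) (x (2*j))" "sig k + sig j \<le> dist (x (2*k+1)) (x (2*j+1))"
    using pd'[OF assms] by simp_all
  have r: "rho j \<ge> 0" "sig j \<ge> 0" "rho k \<ge> 0" "sig k \<ge> 0" using rs by auto
  show "hh k (x (2*j)) = 0" "hh k (x (2*j+1)) = 0" unfolding hh_def using s r
    by (simp_all add: dist_commute max_def)
qed

lemma Hself: "hh j (x (2*j)) - hh j (x (2*j+1)) = dd j"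
proof -
  have r: "rho j \<ge> 0" "sig j \<ge> 0" "rho j + sig j = dd j" "dd j > 0" using rs dd_pos by auto
  have c: "dist (x (2*j+1)) (x (2*j)) = dd j" by (simp add: dd_def dist_commute)
  show ?thesis unfolding hh_def using r c unfolding max_def dd_def[symmetric] by (smt (verit) dist_self)
qed

lemma Huniq: "hh j p \<noteq> 0 \<Longrightarrow> hh k p \<noteq> 0 \<Longrightarrow> j = k"
  using H2[of j k p p] by force

definition "JJ p = (SOME j. hh j p \<noteq> 0)"

lemma JJ: "k \<noteq> JJ p \<Longrightarrow> hh k p = 0"
proof (rule ccontr)
  assume k: "k \<noteq> JJ p" "hh k p \<noteq> 0"
  have "hh (JJ p) p \<noteq> 0" unfolding JJ_def by (rule someI[of _ k]) (rule k(2))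
  then show False using Huniq k by blast
qed

definition FF :: "(nat \<Rightarrow> 'b::real_normed_vector) \<Rightarrow> 'a \<Rightarrow> 'b" where "FF e p = (aa (JJ p) * hh (JJ p) p) *\<^sub>R e (JJ p)"

lemma FF_val: assumes "\<And>k. k \<noteq> j \<Longrightarrow> hh k p = 0"
  shows "FF e p = (aa j * hh j p) *\<^sub>R e j"
proof (cases "JJ p = j")
  case True then show ?thesis by (simp add: FF_def)
next
  case False
  then have "hh (JJ p) p = 0" using assms by blast
  moreover have "hh j p = 0" using JJ False by metis
  ultimately show ?thesis by (simp add: FF_def)
qed

lemma R:
  assumes "p \<noteq> q"
  shows "\<exists>j k \<alpha> \<beta>. (1 / dist p q) *\<^sub>R (FF e p - FF e q) = \<alpha> *\<^sub>R e j + \<beta> *\<^sub>R e k \<and>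
     \<bar>\<alpha>\<bar> \<le> aa j \<and> \<bar>\<beta>\<bar> \<le> aa k \<and> \<bar>\<alpha>\<bar> + \<bar>\<beta>\<bar> \<le> max (aa j) (aa k)"
proof -
  define D where "D = dist p q"
  have D: "D > 0" using assms by (simp add: D_def)
  define j where "j = JJ p"
  define k where "k = JJ q"
  have Fp: "FF e p = (aa j * hh j p) *\<^sub>R e j" unfolding j_def FF_def ..
  have Fq: "FF e q = (aa k * hh k q) *\<^sub>R e k" unfolding k_def FF_def ..
  show ?thesis
  proof (cases "j = k")
    case True
    define s where "s = (hh j p - hh j q) / D"
    have "\<bar>s\<bar> = \<bar>hh j p - hh j q\<bar> / D" using D by (simp add: s_def)
    also have "\<dots> \<le> 1" using H1[of j p q] D by (simp add: D_def)
    finally have "\<bar>s\<bar> + \<bar>0\<bar> \<le> 1" by simp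
    then have n: "\<bar>aa j * s\<bar> \<le> aa j \<and> \<bar>aa j * 0\<bar> \<le> aa j \<and> \<bar>aa j * s\<bar> + \<bar>aa j * 0\<bar> \<le> max (aa j) (aa j)"
      by (rule num[OF aa(1) aa(2) aa(1) aa(2)])
    have "(1 / dist p q) *\<^sub>R (FF e p - FF e q) = (aa j * s) *\<^sub>R e j + (aa j * 0) *\<^sub>R e j"
    proof -
      have "(1 / dist p q) *\<^sub>R (FF e p - FF e q) = ((1/D) * (aa j * hh j p)) *\<^sub>R e j - ((1/D) * (aa j * hh j q)) *\<^sub>R e j"
        unfolding Fp Fq D_def True[symmetric] by (simp only: scaleR_diff_right scaleR_scaleR)
      also have "\<dots> = ((1/D) * (aa j * hh j p) - (1/D) * (aa j * hh j q)) *\<^sub>R e j"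
        by (simp only: scaleR_diff_left)
      also have "\<dots> = (aa j * s) *\<^sub>R e j + (aa j * 0) *\<^sub>R e j"
        by (simp add: s_def diff_divide_distrib right_diff_distrib)
      finally show ?thesis .
    qed
    then show ?thesis using n by (intro exI[of _ j] exI[of _ "aa j * s"] exI[of _ "aa j * 0"]) simp
  next
    case False
    define s where "s = hh j p / D"
    define t where "t = - hh k q / D"
    have st: "\<bar>hh j p\<bar> + \<bar>hh k q\<bar> \<le> D"
    proof (cases "hh j p = 0")
      case True
      have "hh k p = 0" using False by (intro JJ) (simp add: j_def)
      then show ?thesis using H1[of k p q] True by (simp add: D_def dist_commute)
    next
      case nz: False
      show ?thesis
      proof (cases "hh k q = 0")
        case True
        have "hh j q = 0" using \<open>j \<noteq> k\<close> by (intro JJ) (simp add: k_def)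
        then show ?thesis using H1[of j p q] True by (simp add: D_def)
      next
        case False
        then show ?thesis using H2[OF \<open>j \<noteq> k\<close> nz False] by (simp add: D_def)
      qed
    qed
    have "\<bar>s\<bar> + \<bar>t\<bar> = (\<bar>hh j p\<bar> + \<bar>hh k q\<bar>) / D" using D
      by (simp add: s_def t_def add_divide_distrib)
    also have "\<dots> \<le> 1" using st D by simp
    finally have "\<bar>s\<bar> + \<bar>t\<bar> \<le> 1" .
    then have n: "\<bar>aa j * s\<bar> \<le> aa j \<and> \<bar>aa k * t\<bar> \<le> aa k \<and> \<bar>aa j * s\<bar> + \<bar>aa k * t\<bar> \<le> max (aa j) (aa k)"
      by (rule num[OF aa(1) aa(2) aa(1) aa(2)])
    have "(1 / dist p q) *\<^sub>R (FF e p - FF e q) = (aa j * s) *\<^sub>R e j + (aa k * t) *\<^sub>R e k"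
    proof -
      have "(1 / dist p q) *\<^sub>R (FF e p - FF e q) = ((1/D) * (aa j * hh j p)) *\<^sub>R e j - ((1/D) * (aa k * hh k q)) *\<^sub>R e k"
        unfolding Fp Fq D_def by (simp only: scaleR_diff_right scaleR_scaleR)
      also have "\<dots> = (aa j * s) *\<^sub>R e j + (aa k * t) *\<^sub>R e k"
        by (simp add: s_def t_def)
      finally show ?thesis .
    qed
    then show ?thesis using n by (intro exI[of _ j] exI[of _ k] exI[of _ "aa j * s"] exI[of _ "aa k * t"]) simp
  qed
qed

lemma Qnorm:
  assumes e1: "\<forall>n. norm (e n) = 1" and "p \<noteq> q"
  shows "norm ((1 / dist p q) *\<^sub>R (FF e p - FF e q)) \<le> 1"
proof -
  obtain j k \<alpha> \<beta> where R: "(1 / dist p q) *\<^sub>R (FF e p - FF e q) = \<alpha> *\<^sub>R e j + \<beta> *\<^sub>R e k"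
     "\<bar>\<alpha>\<bar> + \<bar>\<beta>\<bar> \<le> max (aa j) (aa k)"
    using R[OF assms(2), of e] by blast
  have "norm (\<alpha> *\<^sub>R e j + \<beta> *\<^sub>R e k) \<le> norm (\<alpha> *\<^sub>R e j) + norm (\<beta> *\<^sub>R e k)"
    by (rule norm_triangle_ineq)
  also have "\<dots> = \<bar>\<alpha>\<bar> + \<bar>\<beta>\<bar>" using e1 by simp
  also have "\<dots> \<le> 1" using R(2) aa(2)[of j] aa(2)[of k] by linarith
  finally show ?thesis using R(1) by simp
qed

lemma FF_lip:
  assumes e1: "\<forall>n. norm (e n) = 1"
  shows "1-lipschitz_on UNIV (\<lambda>p. FF e p - FF e x0)"
proof (rule lipschitz_onI)
  fix p q :: 'a
  show "dist (FF e p - FF e x0) (FF e q - FF e x0) \<le> 1 * dist p q"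
  proof (cases "p = q")
    case True then show ?thesis by simp
  next
    case False
    have D: "dist p q > 0" using False by simp
    have "norm ((1 / dist p q) *\<^sub>R (FF e p - FF e q)) \<le> 1" using Qnorm[OF e1 False] .
    then have "norm (FF e p - FF e q) / dist p q \<le> 1" using D by simp
    then have "norm (FF e p - FF e q) \<le> dist p q" using D by (simp add: divide_le_eq)
    then show ?thesis by (simp add: dist_norm)
  qed
qed simp

lemma FF_pair:
  "(1 / dist (x (2*j)) (x (2*j+1))) *\<^sub>R (FF e (x (2*j)) - FF e (x (2*j+1))) = aa j *\<^sub>R e j"
proof -
  have a: "FF e (x (2*j)) = (aa j * hh j (x (2*j))) *\<^sub>R e j"
    by (rule FF_val) (rule H0(1))
  have b: "FF e (x (2*j+1)) = (aa j * hh j (x (2*j+1))) *\<^sub>R e j"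
    by (rule FF_val) (rule H0(2))
  have "FF e (x (2*j)) - FF e (x (2*j+1)) = (aa j * dd j) *\<^sub>R e j"
    unfolding a b using Hself[of j] by (simp add: scaleR_diff_left[symmetric] right_diff_distrib[symmetric])
  moreover have "dist (x (2*j)) (x (2*j+1)) = dd j" by (simp add: dd_def)
  ultimately show ?thesis using dd_pos[of j] by simp
qed

lemma FF_lipnorm:
  assumes e1: "\<forall>n. norm (e n) = 1"
  shows "lip_norm (\<lambda>p. FF e p - FF e x0) = 1"
proof -
  define D where "D = {norm ((FF e p - FF e x0) - (FF e q - FF e x0)) / dist p q | p q. p \<noteq> q}"
  have eqD: "lip_norm (\<lambda>p. FF e p - FF e x0) = Sup D" unfolding lip_norm_def D_def ..
  have mem: "aa j \<in> D" for j
  proof -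
    have ne: "x (2*j) \<noteq> x (2*j+1)" using dd_pos[of j] by (auto simp: dd_def)
    have "norm ((1 / dist (x (2*j)) (x (2*j+1))) *\<^sub>R (FF e (x (2*j)) - FF e (x (2*j+1)))) = aa j"
      using FF_pair[of j e] e1 aa(1)[of j] by simp
    then have "aa j = norm ((FF e (x (2*j)) - FF e x0) - (FF e (x (2*j+1)) - FF e x0)) / dist (x (2*j)) (x (2*j+1))"
      by simp
    then show ?thesis unfolding D_def using ne by blast
  qed
  have ub: "t \<le> 1" if "t \<in> D" for t
  proof -
    obtain p q where pq: "p \<noteq> q" "t = norm ((FF e p - FF e x0) - (FF e q - FF e x0)) / dist p q"
      using \<open>t \<in> D\<close> unfolding D_def by blast
    have "norm ((1 / dist p q) *\<^sub>R (FF e p - FF e q)) \<le> 1" using Qnorm[OF e1 pq(1)] .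
    then show ?thesis using pq by simp
  qed
  have ne: "D \<noteq> {}" using mem by blast
  have "Sup D \<le> 1" using ne ub by (rule cSup_least)
  moreover have "1 \<le> Sup D"
  proof (rule ccontr)
    assume "\<not> 1 \<le> Sup D"
    then have lt: "Sup D < 1" by simp
    obtain n :: nat where n: "1 / (1 - Sup D) < real n" using reals_Archimedean2 by blast
    have pos: "1 - Sup D > 0" using lt by simp
    have "aa n \<le> Sup D" using mem[of n] ub by (intro cSup_upper) (auto intro!: bdd_aboveI)
    moreover have "1 / (real n + 2) < 1 - Sup D"
    proof -
      have "1 < real n * (1 - Sup D)" using n pos by (simp add: divide_less_eq)
      also have "\<dots> < (real n + 2) * (1 - Sup D)" using pos by (simp add: mult_strict_right_mono)
      finally show ?thesis by (simp add: divide_less_eq mult.commute)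
    qed
    ultimately show False unfolding aa_def by linarith
  qed
  ultimately show ?thesis using eqD by simp
qed

lemma FF_nonattain:
  fixes e :: "nat \<Rightarrow> 'b::real_normed_vector"
  assumes se: "sepseq e"
  shows "\<not> attains_norm_toward (\<lambda>p. FF e p - FF e x0) y"
proof
  assume "attains_norm_toward (\<lambda>p. FF e p - FF e x0) y"
  then obtain p q :: "nat \<Rightarrow> 'a" where pq: "\<forall>n. p n \<noteq> q n"
    and lim0: "(\<lambda>n. (1 / dist (p n) (q n)) *\<^sub>R ((FF e (p n) - FF e x0) - (FF e (q n) - FF e x0))) \<longlonglongrightarrow> y"
    and ny0: "norm y = lip_norm (\<lambda>p. FF e p - FF e x0)"
    unfolding attains_norm_toward_def by blast
  have e1: "\<forall>n. norm (e n) = 1" using se by (simp add: sepseq_def)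
  have ny: "norm y = 1" using ny0 FF_lipnorm[OF e1] by simp
  define Q where "Q n = (1 / dist (p n) (q n)) *\<^sub>R (FF e (p n) - FF e (q n))" for n
  have "Q = (\<lambda>n. (1 / dist (p n) (q n)) *\<^sub>R ((FF e (p n) - FF e x0) - (FF e (q n) - FF e x0)))"
    by (rule ext) (simp add: Q_def)
  then have lim: "Q \<longlonglongrightarrow> y" using lim0 by simp
  have "\<forall>n. \<exists>j k \<alpha> \<beta>. Q n = \<alpha> *\<^sub>R e j + \<beta> *\<^sub>R e k \<and>
     \<bar>\<alpha>\<bar> \<le> aa j \<and> \<bar>\<beta>\<bar> \<le> aa k \<and> \<bar>\<alpha>\<bar> + \<bar>\<beta>\<bar> \<le> max (aa j) (aa k)"
    unfolding Q_def using R pq by blast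
  from choice[OF this] obtain J where "\<forall>n. \<exists>k \<alpha> \<beta>. Q n = \<alpha> *\<^sub>R e (J n) + \<beta> *\<^sub>R e k \<and>
     \<bar>\<alpha>\<bar> \<le> aa (J n) \<and> \<bar>\<beta>\<bar> \<le> aa k \<and> \<bar>\<alpha>\<bar> + \<bar>\<beta>\<bar> \<le> max (aa (J n)) (aa k)" ..
  from choice[OF this] obtain K where "\<forall>n. \<exists>\<alpha> \<beta>. Q n = \<alpha> *\<^sub>R e (J n) + \<beta> *\<^sub>R e (K n) \<and>
     \<bar>\<alpha>\<bar> \<le> aa (J n) \<and> \<bar>\<beta>\<bar> \<le> aa (K n) \<and> \<bar>\<alpha>\<bar> + \<bar>\<beta>\<bar> \<le> max (aa (J n)) (aa (K n))" ..
  from choice[OF this] obtain A where "\<forall>n. \<exists>\<beta>. Q n = A n *\<^sub>R e (J n) + \<beta> *\<^sub>R e (K n) \<and>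
     \<bar>A n\<bar> \<le> aa (J n) \<and> \<bar>\<beta>\<bar> \<le> aa (K n) \<and> \<bar>A n\<bar> + \<bar>\<beta>\<bar> \<le> max (aa (J n)) (aa (K n))" ..
  from choice[OF this] obtain B where rep: "\<forall>n. Q n = A n *\<^sub>R e (J n) + B n *\<^sub>R e (K n) \<and>
     \<bar>A n\<bar> \<le> aa (J n) \<and> \<bar>B n\<bar> \<le> aa (K n) \<and> \<bar>A n\<bar> + \<bar>B n\<bar> \<le> max (aa (J n)) (aa (K n))" ..
  show False by (rule L2[OF se rep lim ny])
qed

end

theorem theorem2p7:
  fixes x0 :: "'a::complete_space" and x :: "nat \<Rightarrow> 'a"
  assumes "pairly_distanced x"
  shows "(A_set x0 = (Lip0 x0 :: ('a \<Rightarrow> 'b::banach) set)) \<longleftrightarrow>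
         (\<exists>B. finite_dimensional_vector_space ((*\<^sub>R) :: real \<Rightarrow> 'b \<Rightarrow> 'b) B)"
proof -
  have injx: "inj x" using assms unfolding pairly_distanced_def by blast
  obtain r :: "nat \<Rightarrow> real" where r01: "\<forall>n. 0 \<le> r n \<and> r n \<le> 1"
    and pd: "\<forall>j k. j \<noteq> k \<longrightarrow>
          dist (x (2*j)) (x (2*k)) \<ge> r j * dist (x (2*j)) (x (2*j+1)) + r k * dist (x (2*k)) (x (2*k+1)) \<and>
          dist (x (2*j)) (x (2*k+1)) \<ge> r j * dist (x (2*j)) (x (2*j+1)) + (1 - r k) * dist (x (2*k)) (x (2*k+1)) \<and>
          dist (x (2*j+1)) (x (2*k+1)) \<ge> (1 - r j) * dist (x (2*j)) (x (2*j+1)) + (1 - r k) * dist (x (2*k)) (x (2*k+1))"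
    using assms unfolding pairly_distanced_def by blast
  have x01: "x 0 \<noteq> x 1" using injx by (metis inj_eq zero_neq_one)
  show ?thesis
  proof
    assume eq: "A_set x0 = (Lip0 x0 :: ('a \<Rightarrow> 'b::banach) set)"
    show "\<exists>B. finite_dimensional_vector_space ((*\<^sub>R) :: real \<Rightarrow> 'b \<Rightarrow> 'b) B"
    proof (rule ccontr)
      assume "\<not> ?thesis"
      then have "\<forall>S::'b set. finite S \<longrightarrow> span S \<noteq> UNIV" using fdvs_iff by blast
      then obtain e :: "nat \<Rightarrow> 'b" where se0: "\<forall>n. norm (e n) = 1 \<and> (\<forall>w\<in>span (e ` {..<n}). 1/2 \<le> norm (e n - w))"
        using riesz_seq by blast
      have se: "sepseq e" using se0 by (simp add: sepseq_def)
      have e1: "\<forall>n. norm (e n) = 1" using se0 by blast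
      define f where "f = (\<lambda>p. FF x r e p - FF x r e x0)"
      have "f \<in> Lip0 x0" unfolding Lip0_def f_def using FF_lip[OF injx r01 pd e1] by auto
      then have "f \<in> A_set x0" using eq by simp
      then obtain y where "attains_norm_toward f y" unfolding A_set_def by blast
      then show False using FF_nonattain[OF injx r01 pd se] unfolding f_def by blast
    qed
  next
    assume "\<exists>B. finite_dimensional_vector_space ((*\<^sub>R) :: real \<Rightarrow> 'b \<Rightarrow> 'b) B"
    then obtain S :: "'b set" where S: "finite S" "span S = UNIV" using fdvs_iff by blast
    show "A_set x0 = (Lip0 x0 :: ('a \<Rightarrow> 'b::banach) set)"
    proof
      show "A_set x0 \<subseteq> (Lip0 x0 :: ('a \<Rightarrow> 'b) set)" unfolding A_set_def by blast
      show "(Lip0 x0 :: ('a \<Rightarrow> 'b) set) \<subseteq> A_set x0"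
      proof
        fix f :: "'a \<Rightarrow> 'b" assume f: "f \<in> Lip0 x0"
        then obtain C where C: "C-lipschitz_on UNIV f" unfolding Lip0_def by blast
        have "\<exists>y. attains_norm_toward f y" by (rule fin_attain[OF S C x01])
        then show "f \<in> A_set x0" using f unfolding A_set_def by blast
      qed
    qed
  qed
qed

end
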